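(* Let $a,c,\mathcal{D},\mathcal{H}>0$ and $\hat\tau\ge0$ with $1-c^3\hat\tau>0$. There exists a unique $s=s^\ast=a/\mathcal{D}$ for which the layer problem (L) admits a heteroclinic orbit from $p_3(a,s^\ast)=(a,0,s^\ast,0)$ to $p_2(a)=(a,a,0,0)$. This heteroclinic orbit lies in the set $\{(w,v,s,j): w=a,\ a+j-v-\mathcal{D}s=0\}$.
   Context: The layer problem (L) in variables $(w,v,s,j)\in\mathbb{R}^4$, with $\dot{}=d/d\zeta$, parameters $c>0$, $\hat\tau\ge0$ with $1-c^3\hat\tau>0$, $\mathcal{D},\mathcal{H}>0$: $$\dot w=0,\quad \dot v=\frac{c^3}{1-c^3\hat\tau}\Big(\hat\tau(w+j-v-\mathcal{D}s)v^2-\hat\tau\mathcal{H}sv-j\Big),\quad \dot s=-\frac{\mathcal{H}}{\mathcal{D}}sv,\quad \dot j=\frac{1}{1-c^3\hat\tau}\Big((w+j-v-\mathcal{D}s)v^2-\mathcal{H}sv-c^3j\Big).$$ Points: $p_2(w)=(w,w,0,0)$, $p_3(w,s)=(w,0,s,0)$; all $p_3(w,s)$ are equilibria of (L). *)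

theory Defs
  imports "HOL-Analysis.Analysis"
begin

type_synonym state = "real \<times> real \<times> real \<times> real"

definition layer_rhs :: "real \<Rightarrow> real \<Rightarrow> real \<Rightarrow> real \<Rightarrow> state \<Rightarrow> state" where
  "layer_rhs c tau D H x = (case x of (w, v, s, j) \<Rightarrow>
     (0,
      c^3 / (1 - c^3 * tau) * (tau * (w + j - v - D * s) * v^2 - tau * H * s * v - j),
      - (H / D) * s * v,
      1 / (1 - c^3 * tau) * ((w + j - v - D * s) * v^2 - H * s * v - c^3 * j)))"

definition p2 :: "real \<Rightarrow> state" where
  "p2 w = (w, w, 0, 0)"

definition p3 :: "real \<Rightarrow> real \<Rightarrow> state" where
  "p3 w s = (w, 0, s, 0)"

definition heteroclinic :: "real \<Rightarrow> real \<Rightarrow> real \<Rightarrow> real \<Rightarrow> (real \<Rightarrow> state) \<Rightarrow> state \<Rightarrow> state \<Rightarrow> bool" where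
  "heteroclinic c tau D H phi p q \<longleftrightarrow>
     p \<noteq> q \<and>
     (\<forall>\<zeta>. (phi has_vector_derivative layer_rhs c tau D H (phi \<zeta>)) (at \<zeta>)) \<and>
     (phi \<longlongrightarrow> p) at_bot \<and> (phi \<longlongrightarrow> q) at_top"

end

theory Submission
  imports Defs "HOL-Real_Asymp.Real_Asymp"
begin


definition Top :: "nat \<Rightarrow> (real \<Rightarrow> real) \<Rightarrow> real \<Rightarrow> real" where
  "Top n g \<theta> = exp (- (real n * \<theta>)) * integral {0..exp \<theta>} (\<lambda>r. r^(n-1) * g (ln r))"

lemma kcont:
  assumes n: "n \<ge> 2" and g: "continuous_on UNIV g" and B: "\<And>x. \<bar>g x\<bar> \<le> B"
  shows "continuous_on {0..} (\<lambda>r::real. r^(n-1) * g (ln r))"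
  unfolding continuous_on_eq_continuous_within
proof
  fix x :: real assume x: "x \<in> {0..}"
  show "continuous (at x within {0..}) (\<lambda>r. r^(n-1) * g (ln r))"
  proof (cases "x = 0")
    case False
    with x have xp: "x > 0" by auto
    have "isCont (\<lambda>r. g (ln r)) x"
    proof (rule isCont_o2[where f=ln])
      show "isCont ln x" using xp by (simp add: isCont_ln)
      show "isCont g (ln x)" using g by (simp add: continuous_on_eq_continuous_at)
    qed
    then have "isCont (\<lambda>r. r^(n-1) * g (ln r)) x" by (intro continuous_intros) auto
    then show ?thesis by (rule continuous_at_imp_continuous_within)
  next
    case True
    have k0: "(\<lambda>r::real. r^(n-1) * g (ln r)) 0 = 0" using n by simp
    have "((\<lambda>r::real. r^(n-1) * g (ln r)) \<longlongrightarrow> 0) (at 0 within {0..})"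
    proof (rule Lim_null_comparison)
      show "\<forall>\<^sub>F r in at 0 within {0..}. norm (r^(n-1) * g (ln r)) \<le> B * \<bar>r\<bar>^(n-1)"
      proof (intro always_eventually allI)
        fix r :: real
        have "\<bar>g (ln r)\<bar> * \<bar>r\<bar>^(n-1) \<le> B * \<bar>r\<bar>^(n-1)" by (rule mult_right_mono[OF B]) simp
        then show "norm (r^(n-1) * g (ln r)) \<le> B * \<bar>r\<bar>^(n-1)" by (simp add: abs_mult power_abs mult.commute)
      qed
      have "((\<lambda>r::real. B * \<bar>r\<bar>^(n-1)) \<longlongrightarrow> B * \<bar>0\<bar>^(n-1)) (at 0 within {0..})"
        by (intro tendsto_intros)
      moreover have "B * \<bar>0::real\<bar>^(n-1) = 0" using n by (simp add: power_0_left)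
      ultimately show "((\<lambda>r::real. B * \<bar>r\<bar>^(n-1)) \<longlongrightarrow> 0) (at 0 within {0..})" by (simp only:)
    qed
    note lim = this
    have e: "(0::real)^(n-1) * g (ln 0) = 0" using n by simp
    show ?thesis unfolding continuous_within True by (subst e) (rule lim)
  qed
qed

lemma int_pow:
  assumes "R \<ge> 0" "n \<ge> 1"
  shows "((\<lambda>r::real. r^(n-1)) has_integral R^n / real n) {0..R}"
proof -
  have "((\<lambda>r::real. r^(n-1)) has_integral (R^n/real n - 0^n/real n)) {0..R}"
    apply (rule fundamental_theorem_of_calculus)
    using assms apply simp
    using assms apply (auto intro!: derivative_eq_intros simp flip: has_real_derivative_iff_has_vector_derivative)
    done
  then show ?thesis using assms by (simp add: power_0_left)
qed

lemma exp_pow_cancel: "exp (- (real n * \<theta>)) * exp \<theta> ^ n = 1"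
  by (simp add: exp_of_nat_mult[symmetric] exp_minus field_simps)

lemma k_integrable:
  assumes n: "n \<ge> 2" and g: "continuous_on UNIV g" and B: "\<And>x. \<bar>g x\<bar> \<le> B"
  shows "(\<lambda>r::real. r^(n-1) * g (ln r)) integrable_on {0..R}"
  by (rule integrable_continuous_interval, rule continuous_on_subset[OF kcont[OF n g B]]) auto

lemma Top_bounds:
  assumes n: "n \<ge> 2" and g: "continuous_on UNIV g" and lh: "\<And>x. lo \<le> g x \<and> g x \<le> hi"
  shows "lo / real n \<le> Top n g \<theta> \<and> Top n g \<theta> \<le> hi / real n"
proof -
  define R where "R = exp \<theta>"
  have R: "R \<ge> 0" unfolding R_def by simp
  have B: "\<bar>g x\<bar> \<le> max \<bar>lo\<bar> \<bar>hi\<bar>" for x using lh[of x] by auto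
  have ki: "(\<lambda>r::real. r^(n-1) * g (ln r)) integrable_on {0..R}" by (rule k_integrable[OF n g B])
  have ip: "((\<lambda>r::real. r^(n-1)) has_integral R^n / real n) {0..R}" using R n by (intro int_pow) auto
  have i1: "((\<lambda>r::real. lo * r^(n-1)) has_integral lo * (R^n / real n)) {0..R}"
    using has_integral_mult_right[OF ip] by simp
  have i2: "((\<lambda>r::real. hi * r^(n-1)) has_integral hi * (R^n / real n)) {0..R}"
    using has_integral_mult_right[OF ip] by simp
  have le1: "lo * (R^n / real n) \<le> integral {0..R} (\<lambda>r::real. r^(n-1) * g (ln r))"
    using has_integral_le[OF i1 integrable_integral[OF ki]] lh
    by (force intro!: mult_right_mono simp: mult.commute)
  have le2: "integral {0..R} (\<lambda>r::real. r^(n-1) * g (ln r)) \<le> hi * (R^n / real n)"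
    using has_integral_le[OF integrable_integral[OF ki] i2] lh
    by (force intro!: mult_right_mono simp: mult.commute)
  have ep: "exp (- (real n * \<theta>)) > 0" by simp
  have c: "exp (- (real n * \<theta>)) * (x * (R^n / real n)) = x / real n" for x
    using exp_pow_cancel[of n \<theta>] unfolding R_def by (simp add: field_simps)
  have "lo / real n = exp (- (real n * \<theta>)) * (lo * (R^n / real n))" by (rule c[symmetric])
  also have "\<dots> \<le> exp (- (real n * \<theta>)) * integral {0..R} (\<lambda>r::real. r^(n-1) * g (ln r))"
    by (rule mult_left_mono[OF le1 less_imp_le[OF ep]])
  finally have 1: "lo / real n \<le> Top n g \<theta>" unfolding Top_def R_def .
  have "exp (- (real n * \<theta>)) * integral {0..R} (\<lambda>r::real. r^(n-1) * g (ln r)) \<le> exp (- (real n * \<theta>)) * (hi * (R^n / real n))"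
    by (rule mult_left_mono[OF le2 less_imp_le[OF ep]])
  also have "\<dots> = hi / real n" by (rule c)
  finally have 2: "Top n g \<theta> \<le> hi / real n" unfolding Top_def R_def .
  show ?thesis using 1 2 by simp
qed

lemma Top_diff:
  assumes n: "n \<ge> 2" and g1: "continuous_on UNIV g1" and B1: "\<And>x. \<bar>g1 x\<bar> \<le> B1"
    and g2: "continuous_on UNIV g2" and B2: "\<And>x. \<bar>g2 x\<bar> \<le> B2"
  shows "Top n g1 \<theta> - Top n g2 \<theta> = Top n (\<lambda>x. g1 x - g2 x) \<theta>"
proof -
  have "integral {0..exp \<theta>} (\<lambda>r. r^(n-1) * (g1 (ln r) - g2 (ln r)))
     = integral {0..exp \<theta>} (\<lambda>r. r^(n-1) * g1 (ln r)) - integral {0..exp \<theta>} (\<lambda>r. r^(n-1) * g2 (ln r))"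
    using integral_diff[OF k_integrable[OF n g1 B1] k_integrable[OF n g2 B2]]
    by (simp add: right_diff_distrib)
  then show ?thesis unfolding Top_def by (simp add: right_diff_distrib)
qed

lemma Top_deriv:
  assumes n: "n \<ge> 2" and g: "continuous_on UNIV g" and B: "\<And>x. \<bar>g x\<bar> \<le> B"
  shows "(Top n g has_real_derivative (g \<theta> - real n * Top n g \<theta>)) (at \<theta>)"
proof -
  define k where "k = (\<lambda>r::real. r^(n-1) * g (ln r))"
  define G where "G = (\<lambda>R. integral {0..R} k)"
  have kc: "continuous_on {0..} k" unfolding k_def by (rule kcont[OF n g B])
  have Gd: "(G has_real_derivative k R) (at R)" if R: "R > 0" for R
  proof -
    have "(G has_real_derivative k R) (at R within {0..R+1})"
      unfolding G_def using R
      by (intro integral_has_real_derivative continuous_on_subset[OF kc]) auto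
    moreover have "at R within {0..R+1} = at R"
      using R by (intro at_within_interior) auto
    ultimately show ?thesis by simp
  qed
  have d1: "((\<lambda>\<theta>. G (exp \<theta>)) has_real_derivative k (exp \<theta>) * exp \<theta>) (at \<theta>)"
    by (rule DERIV_chain2[OF Gd]) (auto intro: derivative_eq_intros)
  have d2: "((\<lambda>\<theta>. exp (- (real n * \<theta>)) * G (exp \<theta>)) has_real_derivative
      exp (- (real n * \<theta>)) * (- real n) * G (exp \<theta>) + exp (- (real n * \<theta>)) * (k (exp \<theta>) * exp \<theta>)) (at \<theta>)"
    by (rule derivative_eq_intros d1 refl)+ simp
  have kk: "k (exp \<theta>) * exp \<theta> = exp \<theta> ^ n * g \<theta>"
    unfolding k_def using n by (simp add: power_Suc[symmetric] mult.commute mult.left_commute)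
  have "exp (- (real n * \<theta>)) * (k (exp \<theta>) * exp \<theta>) = g \<theta>"
    unfolding kk using exp_pow_cancel[of n \<theta>] by (simp add: mult.assoc[symmetric])
  then have "exp (- (real n * \<theta>)) * (- real n) * G (exp \<theta>) + exp (- (real n * \<theta>)) * (k (exp \<theta>) * exp \<theta>)
      = g \<theta> - real n * Top n g \<theta>"
    unfolding Top_def G_def k_def by simp
  moreover have "Top n g = (\<lambda>\<theta>. exp (- (real n * \<theta>)) * G (exp \<theta>))"
    unfolding Top_def G_def k_def by (rule ext) simp
  ultimately show ?thesis using d2 by (auto elim!: DERIV_cong simp: algebra_simps)
qed


lemma dissipative_solution:
  fixes F :: "real \<Rightarrow> real \<Rightarrow> real"
  assumes m0: "0 < m0" "m0 \<le> 1" and mu: "0 < mu" "mu \<le> M"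
   and cont: "\<And>q. continuous_on UNIV q \<Longrightarrow> (\<And>\<theta>. m0 \<le> q \<theta> \<and> q \<theta> \<le> 1) \<Longrightarrow> continuous_on UNIV (\<lambda>\<theta>. F \<theta> (q \<theta>))"
   and lo: "\<And>\<theta>. F \<theta> m0 \<ge> 0" and hi: "\<And>\<theta>. F \<theta> 1 \<le> 0"
   and slope: "\<And>\<theta> y1 y2. m0 \<le> y2 \<Longrightarrow> y2 \<le> y1 \<Longrightarrow> y1 \<le> 1 \<Longrightarrow>
        mu*(y1-y2) \<le> F \<theta> y2 - F \<theta> y1 \<and> F \<theta> y2 - F \<theta> y1 \<le> M*(y1-y2)"
  shows "\<exists>q. (\<forall>\<theta>. m0 \<le> q \<theta> \<and> q \<theta> \<le> 1) \<and> (\<forall>\<theta>. (q has_real_derivative F \<theta> (q \<theta>)) (at \<theta>))"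
proof -
  define n where "n = nat \<lceil>M\<rceil> + 2"
  define L where "L = real n"
  have n2: "n \<ge> 2" unfolding n_def by simp
  have LM: "L \<ge> M" unfolding L_def n_def by linarith
  have Lmu: "L \<ge> mu" using LM mu by simp
  have Lpos: "L > 0" using Lmu mu by simp
  define cl where "cl = (\<lambda>y::real. max m0 (min 1 y))"
  have clr: "m0 \<le> cl y \<and> cl y \<le> 1" for y unfolding cl_def using m0 by auto
  have cll: "\<bar>cl y1 - cl y2\<bar> \<le> \<bar>y1 - y2\<bar>" for y1 y2 unfolding cl_def by auto
  have clid: "m0 \<le> y \<Longrightarrow> y \<le> 1 \<Longrightarrow> cl y = y" for y unfolding cl_def by auto
  have clc: "continuous_on UNIV (\<lambda>\<theta>. cl (f \<theta>))" if "continuous_on UNIV f" for f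
    unfolding cl_def using that by (intro continuous_intros) auto
  define N where "N = (\<lambda>\<theta> y. F \<theta> (cl y) + L * cl y)"
  have Nm: "0 \<le> (F \<theta> c1 + L*c1) - (F \<theta> c2 + L*c2) \<and> (F \<theta> c1 + L*c1) - (F \<theta> c2 + L*c2) \<le> (L - mu)*(c1-c2)"
    if "m0 \<le> c2" "c2 \<le> c1" "c1 \<le> 1" for \<theta> c1 c2
  proof -
    have s: "mu*(c1-c2) \<le> F \<theta> c2 - F \<theta> c1 \<and> F \<theta> c2 - F \<theta> c1 \<le> M*(c1-c2)" using slope that by blast
    have "M*(c1-c2) \<le> L*(c1-c2)" using LM that by (intro mult_right_mono) auto
    then show ?thesis using s by (simp add: algebra_simps)
  qed
  have Nlip: "\<bar>N \<theta> y1 - N \<theta> y2\<bar> \<le> (L - mu) * \<bar>y1 - y2\<bar>" for \<theta> y1 y2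
  proof -
    have "\<bar>N \<theta> y1 - N \<theta> y2\<bar> \<le> (L - mu) * \<bar>cl y1 - cl y2\<bar>"
    proof (cases "cl y2 \<le> cl y1")
      case True
      then show ?thesis using Nm[of "cl y2" "cl y1" \<theta>] clr unfolding N_def by auto
    next
      case False
      then show ?thesis using Nm[of "cl y1" "cl y2" \<theta>] clr unfolding N_def by auto
    qed
    also have "\<dots> \<le> (L - mu) * \<bar>y1 - y2\<bar>" using Lmu cll by (intro mult_left_mono) auto
    finally show ?thesis .
  qed
  have Nr: "L*m0 \<le> N \<theta> y \<and> N \<theta> y \<le> L" for \<theta> y
  proof -
    have "0 \<le> (F \<theta> (cl y) + L*cl y) - (F \<theta> m0 + L*m0)" using Nm[of m0 "cl y" \<theta>] clr m0 by auto
    moreover have "0 \<le> (F \<theta> 1 + L*1) - (F \<theta> (cl y) + L*cl y)" using Nm[of "cl y" 1 \<theta>] clr m0 by auto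
    ultimately show ?thesis using lo[of \<theta>] hi[of \<theta>] unfolding N_def by auto
  qed
  have NB: "\<bar>N \<theta> y\<bar> \<le> L" for \<theta> y using Nr[of \<theta> y] Lpos m0 by (smt (verit) mult_pos_pos)
  have Nc: "continuous_on UNIV (\<lambda>\<theta>. N \<theta> (f \<theta>))" if "continuous_on UNIV f" for f
  proof -
    have "continuous_on UNIV (\<lambda>\<theta>. F \<theta> (cl (f \<theta>)))" by (rule cont[OF clc[OF that]]) (use clr in auto)
    then show ?thesis unfolding N_def using clc[OF that] by (intro continuous_intros)
  qed
  define T where "T = (\<lambda>f::real \<Rightarrow>\<^sub>C real. Top n (\<lambda>\<theta>. N \<theta> (apply_bcontfun f \<theta>)))"
  have Tr: "m0 \<le> T f \<theta> \<and> T f \<theta> \<le> 1" for f \<theta>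
    using Top_bounds[OF n2 Nc[of "apply_bcontfun f"], of "L*m0" L \<theta>] Nr Lpos unfolding T_def L_def[symmetric]
    by auto
  have Td: "(T f has_real_derivative (N \<theta> (f \<theta>) - L * T f \<theta>)) (at \<theta>)" for f \<theta>
    unfolding T_def L_def by (rule Top_deriv[OF n2 Nc NB[unfolded L_def]]) simp
  have Tb: "T f \<in> bcontfun" for f
  proof (rule bcontfun_normI)
    show "continuous_on UNIV (T f)"
      using Td by (meson DERIV_continuous continuous_at_imp_continuous_on)
    show "norm (T f x) \<le> 1" for x using Tr[of f x] m0 by auto
  qed
  define \<Phi> where "\<Phi> = (\<lambda>f. Bcontfun (T f))"
  have \<Phi>a: "apply_bcontfun (\<Phi> f) = T f" for f unfolding \<Phi>_def using Tb by (simp add: Bcontfun_inverse)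
  have contr: "dist (\<Phi> f) (\<Phi> g) \<le> ((L - mu)/L) * dist f g" for f g
  proof (rule dist_bound)
    fix \<theta>
    define d where "d = dist f g"
    have gi: "\<bar>N x (f x) - N x (g x)\<bar> \<le> (L - mu) * d" for x
    proof -
      have "\<bar>f x - g x\<bar> \<le> d" unfolding d_def using dist_bounded[of f x g] by (simp add: dist_real_def)
      then show ?thesis using Nlip[of x "f x" "g x"] Lmu by (smt (verit) mult_left_mono)
    qed
    have "T f \<theta> - T g \<theta> = Top n (\<lambda>x. N x (f x) - N x (g x)) \<theta>"
      unfolding T_def by (rule Top_diff[OF n2 Nc NB Nc NB]) simp_all
    moreover have "- ((L - mu) * d) / real n \<le> Top n (\<lambda>x. N x (f x) - N x (g x)) \<theta> \<and>
         Top n (\<lambda>x. N x (f x) - N x (g x)) \<theta> \<le> ((L - mu) * d) / real n"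
    proof (rule Top_bounds[OF n2])
      show "continuous_on UNIV (\<lambda>x. N x (f x) - N x (g x))" by (intro continuous_intros Nc) simp_all
      fix x
      have "N x (f x) - N x (g x) \<le> (L - mu) * d \<and> - (N x (f x) - N x (g x)) \<le> (L - mu) * d"
        using gi[of x] by (simp only: abs_le_iff)
      then show "- ((L - mu) * d) \<le> N x (f x) - N x (g x) \<and> N x (f x) - N x (g x) \<le> (L - mu) * d"
        by linarith
    qed
    ultimately have "\<bar>T f \<theta> - T g \<theta>\<bar> \<le> ((L - mu) * d) / L" unfolding L_def by auto
    then show "dist (\<Phi> f \<theta>) (\<Phi> g \<theta>) \<le> ((L - mu)/L) * dist f g"
      unfolding \<Phi>a d_def dist_real_def by simp
  qed
  have "\<exists>!x. \<Phi> x = x"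
    by (rule banach_fix_type[of "(L - mu)/L"]) (use Lmu Lpos mu contr in auto)
  then obtain x where fx: "\<Phi> x = x" by blast
  define q where "q = apply_bcontfun x"
  have qT: "q = T x" unfolding q_def using \<Phi>a[of x] fx by simp
  have qr: "m0 \<le> q \<theta> \<and> q \<theta> \<le> 1" for \<theta> unfolding qT by (rule Tr)
  have "(q has_real_derivative F \<theta> (q \<theta>)) (at \<theta>)" for \<theta>
  proof -
    have "N \<theta> (x \<theta>) - L * T x \<theta> = F \<theta> (q \<theta>)"
      using clid[OF conjunct1[OF qr[of \<theta>]] conjunct2[OF qr[of \<theta>]]] unfolding N_def q_def[symmetric] qT[symmetric]
      by simp
    then show ?thesis using Td[of x \<theta>] unfolding qT by simp
  qed
  then show ?thesis using qr by blast
qed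


lemma antideriv:
  assumes f: "continuous_on UNIV f"
  shows "\<exists>Z. Z 0 = 0 \<and> (\<forall>x. (Z has_real_derivative f x) (at x))"
proof -
  define Z where "Z = (\<lambda>y::real. integral {0..y} f - integral {y..0} f)"
  have fi: "f integrable_on {a..b}" for a b by (rule integrable_continuous_interval, rule continuous_on_subset[OF f]) auto
  have n0: "integral {y..z} f = 0" if "z \<le> y" for y z :: real
    by (metis has_integral_null_real content_real_eq_0 integral_unique that)
  have "(Z has_real_derivative f x) (at x)" for x
  proof -
    define c where "c = - \<bar>x\<bar> - 1"
    have eq: "integral {c..y} f - integral {c..0} f = Z y" if "y \<in> {c<..}" for y
    proof (cases "y \<ge> 0")
      case True
      have "integral {c..0} f + integral {0..y} f = integral {c..y} f"
        using True c_def by (intro Henstock_Kurzweil_Integration.integral_combine fi) auto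
      then show ?thesis unfolding Z_def using n0[OF True] by simp
    next
      case False
      have "integral {c..y} f + integral {y..0} f = integral {c..0} f"
        using False that by (intro Henstock_Kurzweil_Integration.integral_combine fi) auto
      then show ?thesis unfolding Z_def using n0[of y 0] False by simp
    qed
    have "((\<lambda>y. integral {c..y} f) has_real_derivative f x) (at x within {c..x+1})"
      using c_def by (intro integral_has_real_derivative continuous_on_subset[OF f]) auto
    moreover have "at x within {c..x+1} = at x" using c_def by (intro at_within_interior) auto
    ultimately have "((\<lambda>y. integral {c..y} f) has_real_derivative f x) (at x)" by simp
    then have "((\<lambda>y. integral {c..y} f - integral {c..0} f) has_real_derivative f x - 0) (at x)"
      by (intro DERIV_diff DERIV_const)
    then have "((\<lambda>y. integral {c..y} f - integral {c..0} f) has_real_derivative f x) (at x)" by simp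
    then show ?thesis
      by (rule has_field_derivative_transform_within_open[where S="{c<..}"]) (use eq c_def in auto)
  qed
  moreover have "Z 0 = 0" unfolding Z_def by simp
  ultimately show ?thesis by blast
qed

lemma inverse_param:
  fixes Z d :: "real \<Rightarrow> real"
  assumes Zd: "\<And>x. (Z has_real_derivative d x) (at x)" and dlo: "\<And>x. d x \<ge> lo" and lo: "lo > 0"
    and Z0: "Z 0 = 0"
  shows "\<exists>\<Theta>. (\<forall>\<zeta>. (\<Theta> has_real_derivative inverse (d (\<Theta> \<zeta>))) (at \<zeta>)) \<and>
     filterlim \<Theta> at_top at_top \<and> filterlim \<Theta> at_bot at_bot"
proof -
  have Zc: "isCont Z x" for x using Zd by (rule DERIV_isCont)
  have Zcon: "continuous_on S Z" for S using Zc by (simp add: continuous_at_imp_continuous_on)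
  have mono: "Z x < Z y" if "x < y" for x y
    using that
  proof (rule DERIV_pos_imp_increasing)
    fix t show "\<exists>y. (Z has_real_derivative y) (at t) \<and> 0 < y"
      using Zd[of t] dlo[of t] lo by (intro exI[of _ "d t"]) auto
  qed
  have g1: "Z x \<ge> lo * x" if "x \<ge> 0" for x
  proof -
    have "(\<lambda>x. Z x - lo * x) 0 \<le> (\<lambda>x. Z x - lo * x) x"
      using that
      by (rule DERIV_nonneg_imp_nondecreasing)
        (use Zd dlo in \<open>force intro!: derivative_eq_intros\<close>)
    then show ?thesis using Z0 by simp
  qed
  have g2: "Z x \<le> lo * x" if "x \<le> 0" for x
  proof -
    have "(\<lambda>x. Z x - lo * x) x \<le> (\<lambda>x. Z x - lo * x) 0"
      using that
      by (rule DERIV_nonneg_imp_nondecreasing)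
        (use Zd dlo in \<open>force intro!: derivative_eq_intros\<close>)
    then show ?thesis using Z0 by simp
  qed
  have surj: "\<exists>\<theta>. Z \<theta> = \<zeta>" for \<zeta>
  proof (cases "\<zeta> \<ge> 0")
    case True
    have "\<exists>x. 0 \<le> x \<and> x \<le> \<zeta>/lo \<and> Z x = \<zeta>"
      using True lo g1[of "\<zeta>/lo"] Z0 by (intro IVT' Zcon) auto
    then show ?thesis by blast
  next
    case False
    have "\<exists>x. \<zeta>/lo \<le> x \<and> x \<le> 0 \<and> Z x = \<zeta>"
      using False lo g2[of "\<zeta>/lo"] Z0 by (intro IVT' Zcon) (auto simp: divide_nonpos_pos)
    then show ?thesis by blast
  qed
  define \<Theta> where "\<Theta> = (\<lambda>\<zeta>. SOME \<theta>. Z \<theta> = \<zeta>)"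
  have ZT: "Z (\<Theta> \<zeta>) = \<zeta>" for \<zeta> unfolding \<Theta>_def using surj by (rule someI_ex)
  have TZ: "\<Theta> (Z \<theta>) = \<theta>" for \<theta>
    by (metis ZT mono linorder_neqE_linordered_idom order_less_irrefl)
  have Tc: "isCont \<Theta> \<zeta>" for \<zeta>
  proof -
    have "isCont \<Theta> (Z (\<Theta> \<zeta>))"
      by (rule isCont_inverse_function2[of "\<Theta> \<zeta> - 1" _ "\<Theta> \<zeta> + 1"]) (auto simp: TZ Zc)
    then show ?thesis by (simp add: ZT)
  qed
  have Td: "(\<Theta> has_real_derivative inverse (d (\<Theta> \<zeta>))) (at \<zeta>)" for \<zeta>
    by (rule DERIV_inverse_function[where f=Z and g=\<Theta> and x=\<zeta> and a="\<zeta> - 1" and b="\<zeta> + 1"])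
       (use Zd ZT Tc dlo[of "\<Theta> \<zeta>"] lo in auto)
  have l1: "filterlim \<Theta> at_top at_top"
    unfolding filterlim_at_top eventually_at_top_linorder
  proof
    fix B show "\<exists>N. \<forall>\<zeta>\<ge>N. B \<le> \<Theta> \<zeta>"
      by (rule exI[of _ "Z B"]) (metis ZT mono not_le order_less_le_trans order_less_irrefl)
  qed
  have l2: "filterlim \<Theta> at_bot at_bot"
    unfolding filterlim_at_bot eventually_at_bot_linorder
  proof
    fix B show "\<exists>N. \<forall>\<zeta>\<le>N. \<Theta> \<zeta> \<le> B"
      by (rule exI[of _ "Z B"]) (metis ZT mono not_le order_le_less_trans order_less_irrefl)
  qed
  show ?thesis using Td l1 l2 by blast
qed



lemma q_limit:
  fixes q \<rho> :: "real \<Rightarrow> real"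
  assumes A: "A > 0" and K: "K \<ge> 0" and qr: "\<And>\<theta>. m0 \<le> q \<theta> \<and> q \<theta> \<le> 1" and m0: "m0 > 0"
    and qd: "\<And>\<theta>. (q has_real_derivative (A*(1/q \<theta> - 1) - \<rho> \<theta>*(q \<theta>+K))) (at \<theta>)"
    and \<rho>l: "(\<rho> \<longlongrightarrow> 0) at_top" and \<rho>p: "\<And>\<theta>. \<rho> \<theta> \<ge> 0"
  shows "(q \<longlongrightarrow> 1) at_top"
proof (rule tendstoI)
  fix \<epsilon> :: real assume \<epsilon>: "\<epsilon> > 0"
  define e where "e = \<epsilon>/3"
  have e: "e > 0" using \<epsilon> e_def by simp
  have "\<forall>\<^sub>F \<theta> in at_top. \<rho> \<theta> < A*e/(1+K)"
    using \<rho>l A e K by (intro order_tendstoD) auto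
  then obtain T where T: "\<And>\<theta>. \<theta> \<ge> T \<Longrightarrow> \<rho> \<theta> < A*e/(1+K)" unfolding eventually_at_top_linorder by blast
  define z where "z = (\<lambda>\<theta>. (1 - q \<theta> - e) * exp (A*\<theta>))"
  have zle: "z \<theta> \<le> z T" if "\<theta> \<ge> T" for \<theta>
  proof (rule DERIV_nonpos_imp_nonincreasing[OF that])
    fix x assume x: "T \<le> x" "x \<le> \<theta>"
    have d: "(z has_real_derivative (- (A*(1/q x - 1) - \<rho> x*(q x+K))) * exp (A*x) + (1 - q x - e) * (exp (A*x) * A)) (at x)"
      unfolding z_def by (rule derivative_eq_intros qd refl)+ simp
    have r: "\<rho> x*(1+K) \<le> A*e" using T[of x] x K by (simp add: field_simps)
    have qx: "m0 \<le> q x" "q x \<le> 1" using qr[of x] by auto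
    have c1: "1/q x - 1 \<ge> 1 - q x"
    proof -
      have "(1 - q x) * 1 \<le> (1 - q x) * (1 / q x)" using qx m0 by (intro mult_left_mono) (auto simp: field_simps)
      then show ?thesis using qx m0 by (simp add: field_simps)
    qed
    have c2: "\<rho> x*(q x+K) \<le> \<rho> x*(1+K)" using qx \<rho>p[of x] by (intro mult_left_mono) auto
    have "- (A*(1/q x - 1) - \<rho> x*(q x+K)) + (1 - q x - e) * A \<le> 0"
    proof -
      have "A*(1 - q x) \<le> A*(1/q x - 1)" using A c1 by (intro mult_left_mono) auto
      moreover have "(1 - q x - e) * A = A*(1 - q x) - A*e" by (simp add: algebra_simps)
      ultimately show ?thesis using r c2 by linarith
    qed
    then have "(- (A*(1/q x - 1) - \<rho> x*(q x+K)) + (1 - q x - e) * A) * exp (A*x) \<le> 0"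
      by (rule mult_nonpos_nonneg) simp
    moreover have "(- (A*(1/q x - 1) - \<rho> x*(q x+K))) * exp (A*x) + (1 - q x - e) * (exp (A*x) * A)
       = (- (A*(1/q x - 1) - \<rho> x*(q x+K)) + (1 - q x - e) * A) * exp (A*x)" by (simp add: algebra_simps)
    ultimately have "(- (A*(1/q x - 1) - \<rho> x*(q x+K))) * exp (A*x) + (1 - q x - e) * (exp (A*x) * A) \<le> 0"
      by simp
    then show "\<exists>y. (z has_real_derivative y) (at x) \<and> y \<le> 0" using d by blast
  qed
  have zT: "z T \<le> exp (A*T)" unfolding z_def using qr[of T] e m0 by (simp add: mult_le_cancel_right1)
  have "((\<lambda>\<theta>. exp (A*T) * exp (- (A*\<theta>))) \<longlongrightarrow> 0) at_top" using A by real_asymp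
  then have "\<forall>\<^sub>F \<theta> in at_top. exp (A*T) * exp (- (A*\<theta>)) < e" using e by (intro order_tendstoD) auto
  moreover have "\<forall>\<^sub>F \<theta> in at_top. \<theta> \<ge> T" by (rule eventually_ge_at_top)
  ultimately show "\<forall>\<^sub>F \<theta> in at_top. dist (q \<theta>) 1 < \<epsilon>"
  proof eventually_elim
    case (elim \<theta>)
    have "(1 - q \<theta> - e) * exp (A*\<theta>) \<le> exp (A*T)" using zle[OF elim(2)] zT unfolding z_def by linarith
    then have "1 - q \<theta> - e \<le> exp (A*T) * exp (- (A*\<theta>))"
      by (simp add: exp_minus field_simps)
    then show ?case using elim(1) qr[of \<theta>] e_def by (simp add: dist_real_def)
  qed
qed



lemma hvd_fst: "(f has_vector_derivative f') F \<Longrightarrow> ((\<lambda>x. fst (f x)) has_vector_derivative fst f') F"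
  unfolding has_vector_derivative_def by (drule has_derivative_fst) simp

lemma hvd_snd: "(f has_vector_derivative f') F \<Longrightarrow> ((\<lambda>x. snd (f x)) has_vector_derivative snd f') F"
  unfolding has_vector_derivative_def by (drule has_derivative_snd) simp

lemma necessity:
  fixes a c D H tau s :: real and phi :: "real \<Rightarrow> state"
  assumes c: "1 - c^3 * tau > 0" and D: "D > 0"
    and het: "heteroclinic c tau D H phi (p3 a s) (p2 a)"
  shows "s = a / D \<and> (\<forall>\<zeta>. phi \<zeta> \<in> {(w, v, s, j). w = a \<and> a + j - v - D * s = 0})"
proof -
  define w where "w = (\<lambda>z. fst (phi z))"
  define v where "v = (\<lambda>z. fst (snd (phi z)))"
  define sv where "sv = (\<lambda>z. fst (snd (snd (phi z))))"
  define j where "j = (\<lambda>z. snd (snd (snd (phi z))))"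
  have ph: "phi z = (w z, v z, sv z, j z)" for z unfolding w_def v_def sv_def j_def by simp
  have pd: "(phi has_vector_derivative layer_rhs c tau D H (phi z)) (at z)" for z
    using het unfolding heteroclinic_def by blast
  define E where "E = 1 - c^3 * tau"
  have E: "E \<noteq> 0" using c E_def by simp
  have rhs: "layer_rhs c tau D H (phi z) = (0,
      c^3 / E * (tau * (w z + j z - v z - D * sv z) * v z^2 - tau * H * sv z * v z - j z),
      - (H / D) * sv z * v z,
      1 / E * ((w z + j z - v z - D * sv z) * v z^2 - H * sv z * v z - c^3 * j z))" for z
    unfolding ph layer_rhs_def E_def by simp
  have wd: "(w has_real_derivative 0) (at z)" for z
    using hvd_fst[OF pd[of z]] unfolding rhs w_def by (simp add: has_real_derivative_iff_has_vector_derivative)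
  have vd: "(v has_real_derivative c^3 / E * (tau * (w z + j z - v z - D * sv z) * v z^2 - tau * H * sv z * v z - j z)) (at z)" for z
    using hvd_fst[OF hvd_snd[OF pd[of z]]] unfolding rhs v_def by (simp add: has_real_derivative_iff_has_vector_derivative)
  have sd: "(sv has_real_derivative - (H / D) * sv z * v z) (at z)" for z
    using hvd_fst[OF hvd_snd[OF hvd_snd[OF pd[of z]]]] unfolding rhs sv_def by (simp add: has_real_derivative_iff_has_vector_derivative)
  have jd: "(j has_real_derivative 1 / E * ((w z + j z - v z - D * sv z) * v z^2 - H * sv z * v z - c^3 * j z)) (at z)" for z
    using hvd_snd[OF hvd_snd[OF hvd_snd[OF pd[of z]]]] unfolding rhs j_def by (simp add: has_real_derivative_iff_has_vector_derivative)
  define u where "u = (\<lambda>z. w z + j z - v z - D * sv z)"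
  have ud: "(u has_real_derivative u z * v z^2) (at z)" for z
  proof -
    have "(u has_real_derivative 0 + 1 / E * ((w z + j z - v z - D * sv z) * v z^2 - H * sv z * v z - c^3 * j z)
       - c^3 / E * (tau * (w z + j z - v z - D * sv z) * v z^2 - tau * H * sv z * v z - j z)
       - D * (- (H / D) * sv z * v z)) (at z)"
      unfolding u_def by (intro derivative_intros wd vd sd jd DERIV_cmult)
    moreover have "0 + 1 / E * ((w z + j z - v z - D * sv z) * v z^2 - H * sv z * v z - c^3 * j z)
       - c^3 / E * (tau * (w z + j z - v z - D * sv z) * v z^2 - tau * H * sv z * v z - j z)
       - D * (- (H / D) * sv z * v z) = u z * v z^2"
    proof -
      define X where "X = u z * v z^2 - H * sv z * v z"
      have x1: "(w z + j z - v z - D * sv z) * v z^2 - H * sv z * v z - c^3 * j z = X - c^3 * j z"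
        unfolding X_def u_def by simp
      have x2: "tau * (w z + j z - v z - D * sv z) * v z^2 - tau * H * sv z * v z - j z = tau * X - j z"
        unfolding X_def u_def by (simp add: algebra_simps)
      have x3: "1 / E * (X - c^3 * j z) - c^3 / E * (tau * X - j z) = X"
      proof -
        have "1 / E * (X - c^3 * j z) - c^3 / E * (tau * X - j z) = (X - c^3 * j z - c^3 * (tau * X - j z)) / E"
          using E by (simp add: field_simps)
        also have "X - c^3 * j z - c^3 * (tau * X - j z) = E * X" unfolding E_def by (simp add: algebra_simps)
        finally show ?thesis using E by simp
      qed
      have x4: "D * (- (H / D) * sv z * v z) = - (H * sv z * v z)" using D by simp
      show ?thesis unfolding x1 x2 x4 using x3 unfolding X_def by simp
    qed
    ultimately show ?thesis by simp
  qed
  have Ud: "((\<lambda>z. u z ^ 2) has_real_derivative 2 * (u z * v z)^2) (at z)" for z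
    by (rule derivative_eq_intros ud refl)+ (simp add: power2_eq_square)
  have lt: "(phi \<longlongrightarrow> p2 a) at_top" and lb: "(phi \<longlongrightarrow> p3 a s) at_bot"
    using het unfolding heteroclinic_def by auto
  have wt: "(w \<longlongrightarrow> a) at_top" unfolding w_def using tendsto_fst[OF lt] by (simp add: p2_def)
  have vt: "(v \<longlongrightarrow> a) at_top" unfolding v_def using tendsto_fst[OF tendsto_snd[OF lt]] by (simp add: p2_def)
  have st: "(sv \<longlongrightarrow> 0) at_top" unfolding sv_def using tendsto_fst[OF tendsto_snd[OF tendsto_snd[OF lt]]] by (simp add: p2_def)
  have jt: "(j \<longlongrightarrow> 0) at_top" unfolding j_def using tendsto_snd[OF tendsto_snd[OF tendsto_snd[OF lt]]] by (simp add: p2_def)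
  have wb: "(w \<longlongrightarrow> a) at_bot" unfolding w_def using tendsto_fst[OF lb] by (simp add: p3_def)
  have vb: "(v \<longlongrightarrow> 0) at_bot" unfolding v_def using tendsto_fst[OF tendsto_snd[OF lb]] by (simp add: p3_def)
  have sb: "(sv \<longlongrightarrow> s) at_bot" unfolding sv_def using tendsto_fst[OF tendsto_snd[OF tendsto_snd[OF lb]]] by (simp add: p3_def)
  have jb: "(j \<longlongrightarrow> 0) at_bot" unfolding j_def using tendsto_snd[OF tendsto_snd[OF tendsto_snd[OF lb]]] by (simp add: p3_def)
  have ut: "(u \<longlongrightarrow> 0) at_top"
  proof -
    have "(u \<longlongrightarrow> a + 0 - a - D * 0) at_top" unfolding u_def by (intro tendsto_intros wt vt st jt)
    then show ?thesis by simp
  qed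
  have ub: "(u \<longlongrightarrow> a - D * s) at_bot"
  proof -
    have "(u \<longlongrightarrow> a + 0 - 0 - D * s) at_bot" unfolding u_def by (intro tendsto_intros wb vb sb jb)
    then show ?thesis by simp
  qed
  have u0: "u z = 0" for z
  proof -
    have mono: "u z ^ 2 \<le> u t ^ 2" if "z \<le> t" for t
    proof (rule DERIV_nonneg_imp_nondecreasing[OF that])
      fix x show "\<exists>y. ((\<lambda>a. (u a)\<^sup>2) has_real_derivative y) (at x) \<and> 0 \<le> y"
        using Ud[of x] by (intro exI[of _ "2 * (u x * v x)^2"]) auto
    qed
    have "((\<lambda>t. u t ^ 2) \<longlongrightarrow> 0 ^ 2) at_top" by (intro tendsto_intros ut)
    then have lim: "((\<lambda>t. u t ^ 2) \<longlongrightarrow> 0) at_top" by simp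
    have ev: "eventually (\<lambda>t. u z ^ 2 \<le> u t ^ 2) at_top"
      by (rule eventually_at_top_linorderI[of z]) (rule mono)
    have "u z ^ 2 \<le> 0" by (rule tendsto_le[OF trivial_limit_at_top_linorder lim tendsto_const ev])
    then show ?thesis by simp
  qed
  have "u = (\<lambda>z. 0)" by (rule ext) (rule u0)
  then have "((\<lambda>z::real. 0::real) \<longlongrightarrow> a - D * s) at_bot" using ub by simp
  then have "a - D * s = 0" by (simp add: tendsto_const_iff)
  then have s: "s = a / D" using D by (simp add: field_simps)
  have wc: "w z = w 0" for z by (rule DERIV_isconst_all) (use wd in auto)
  have "w = (\<lambda>z. w 0)" by (rule ext) (rule wc)
  then have "((\<lambda>z::real. w 0) \<longlongrightarrow> a) at_top" using wt by simp
  then have w0: "w 0 = a" by (simp add: tendsto_const_iff)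
  have "phi z \<in> {(w, v, s, j). w = a \<and> a + j - v - D * s = 0}" for z
    using u0[of z] wc[of z] w0 unfolding ph u_def by simp
  then show ?thesis using s by blast
qed



lemma rho_facts:
  "0 < 1/(1+exp \<theta>)" "1/(1+exp \<theta>) < (1::real)"
  "((\<lambda>\<theta>::real. 1/(1+exp \<theta>)) has_real_derivative - (1/(1+exp \<theta>) * (1 - 1/(1+exp \<theta>)))) (at \<theta>)"
proof -
  have p: "1 + exp \<theta> > 0" by (smt (verit) exp_gt_zero)
  show "0 < 1/(1+exp \<theta>)" using p by simp
  show "1/(1+exp \<theta>) < (1::real)" using p by (simp add: field_simps)
  have "((\<lambda>\<theta>::real. 1/(1+exp \<theta>)) has_real_derivative - (1 * exp \<theta>) / (1+exp \<theta>)^2) (at \<theta>)"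
    using p by (auto intro!: derivative_eq_intros simp: power2_eq_square)
  moreover have "- (1 * exp \<theta>) / (1+exp \<theta>)^2 = - (1/(1+exp \<theta>) * (1 - 1/(1+exp \<theta>)))"
    using p by (simp add: field_simps power2_eq_square)
  ultimately show "((\<lambda>\<theta>::real. 1/(1+exp \<theta>)) has_real_derivative - (1/(1+exp \<theta>) * (1 - 1/(1+exp \<theta>)))) (at \<theta>)"
    by simp
qed

lemma rho_lims:
  "((\<lambda>\<theta>::real. 1/(1+exp \<theta>)) \<longlongrightarrow> 0) at_top"
  "((\<lambda>\<theta>::real. 1/(1+exp \<theta>)) \<longlongrightarrow> 1) at_bot"
  by real_asymp+

lemma get_q:
  fixes A K :: real
  assumes A: "A > 0" and K: "K \<ge> 0"
  shows "\<exists>q m0. m0 > 0 \<and> (\<forall>\<theta>. m0 \<le> q \<theta> \<and> q \<theta> \<le> 1) \<and>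
     (\<forall>\<theta>. (q has_real_derivative (A*(1/q \<theta> - 1) - 1/(1+exp \<theta>)*(q \<theta>+K))) (at \<theta>)) \<and>
     (q \<longlongrightarrow> 1) at_top"
proof -
  define \<rho> where "\<rho> = (\<lambda>\<theta>::real. 1/(1+exp \<theta>))"
  have \<rho>0: "0 < \<rho> \<theta>" and \<rho>1: "\<rho> \<theta> < 1" for \<theta> unfolding \<rho>_def using rho_facts by auto
  define F where "F = (\<lambda>\<theta> y. A*(1/y - 1) - \<rho> \<theta>*(y+K))"
  define m0 where "m0 = min (1/2) (A/(1+2*K))"
  have m0p: "m0 > 0" unfolding m0_def using A K by simp
  have m0h: "m0 \<le> 1/2" unfolding m0_def by (rule min.cobounded1)
  have m0A: "m0*(1+2*K) \<le> A"
  proof -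
    have "m0 \<le> A/(1+2*K)" unfolding m0_def by (rule min.cobounded2)
    then have "m0*(1+2*K) \<le> A/(1+2*K)*(1+2*K)" using K by (intro mult_right_mono) auto
    also have "\<dots> = A" using K by simp
    finally show ?thesis .
  qed
  define M where "M = A/m0^2 + 1"
  have Am: "A \<le> A/m0^2"
  proof -
    have "m0^2 \<le> 1" using m0p m0h by (simp add: power_le_one)
    then show ?thesis using A m0p by (simp add: field_simps)
  qed
  have "\<exists>q. (\<forall>\<theta>. m0 \<le> q \<theta> \<and> q \<theta> \<le> 1) \<and> (\<forall>\<theta>. (q has_real_derivative F \<theta> (q \<theta>)) (at \<theta>))"
  proof (rule dissipative_solution[of m0 A M F])
    show "0 < m0" by (rule m0p)
    show "m0 \<le> 1" using m0h by simp
    show "0 < A" by (rule A)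
    show "A \<le> M" unfolding M_def using Am by simp
    show "continuous_on UNIV (\<lambda>\<theta>. F \<theta> (q \<theta>))"
      if "continuous_on UNIV q" "\<And>\<theta>. m0 \<le> q \<theta> \<and> q \<theta> \<le> 1" for q
    proof -
      have "q \<theta> \<noteq> 0" for \<theta> using that(2)[of \<theta>] m0p by auto
      moreover have "1 + exp \<theta> \<noteq> 0" for \<theta>::real by (smt (verit) exp_gt_zero)
      ultimately show ?thesis unfolding F_def \<rho>_def using that(1)
        by (intro continuous_intros) auto
    qed
    show "0 \<le> F \<theta> m0" for \<theta>
    proof -
      have a1: "A/m0 \<ge> 1 + 2*K" using m0A m0p by (simp add: field_simps)
      have a2: "A \<le> A/(2*m0)" using m0h m0p A by (simp add: field_simps)
      have a3: "A*(1/m0 - 1) = A/m0 - A" by (simp add: algebra_simps)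
      have a4: "\<rho> \<theta>*(m0+K) \<le> m0 + K" using \<rho>1[of \<theta>] m0p K
        by (intro mult_left_le_one_le) (auto simp: less_imp_le[OF \<rho>0])
      have a5: "A/(2*m0) = (A/m0)/2" by simp
      show ?thesis unfolding F_def using a1 a2 a3 a4 a5 m0h by linarith
    qed
    show "F \<theta> 1 \<le> 0" for \<theta> unfolding F_def using \<rho>0[of \<theta>] K by simp
    show "A*(y1-y2) \<le> F \<theta> y2 - F \<theta> y1 \<and> F \<theta> y2 - F \<theta> y1 \<le> M*(y1-y2)"
      if y: "m0 \<le> y2" "y2 \<le> y1" "y1 \<le> 1" for \<theta> y1 y2
    proof -
      have p1: "y1 > 0" "y2 > 0" using y m0p by auto
      have eq: "F \<theta> y2 - F \<theta> y1 = (y1 - y2) * (A/(y1*y2) + \<rho> \<theta>)"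
        unfolding F_def using p1 by (simp add: field_simps)
      have b1: "A \<le> A/(y1*y2)"
      proof -
        have "y1*y2 \<le> 1" using y p1 by (simp add: mult_le_one)
        then show ?thesis using A p1 by (simp add: field_simps)
      qed
      have b2: "A/(y1*y2) \<le> A/m0^2"
      proof -
        have "m0*m0 \<le> y1*y2" using y m0p by (intro mult_mono) auto
        then show ?thesis using A p1 m0p by (intro divide_left_mono) (auto simp: power2_eq_square)
      qed
      have d: "y1 - y2 \<ge> 0" using y by simp
      have "(y1 - y2) * A \<le> (y1 - y2) * (A/(y1*y2) + \<rho> \<theta>)"
        using b1 \<rho>0[of \<theta>] d by (intro mult_left_mono) auto
      moreover have "(y1 - y2) * (A/(y1*y2) + \<rho> \<theta>) \<le> (y1 - y2) * M"
        unfolding M_def using b2 \<rho>1[of \<theta>] d by (intro mult_left_mono) auto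
      ultimately show ?thesis unfolding eq by (simp add: mult.commute)
    qed
  qed
  then obtain q where qr: "\<And>\<theta>. m0 \<le> q \<theta> \<and> q \<theta> \<le> 1" and qd: "\<And>\<theta>. (q has_real_derivative F \<theta> (q \<theta>)) (at \<theta>)"
    by blast
  have ql: "(q \<longlongrightarrow> 1) at_top"
  proof (rule q_limit[where \<rho>=\<rho> and A=A and K=K, OF _ _ qr m0p])
    show "(q has_real_derivative A * (1 / q \<theta> - 1) - \<rho> \<theta> * (q \<theta> + K)) (at \<theta>)" for \<theta>
      using qd[of \<theta>] unfolding F_def .
    show "(\<rho> \<longlongrightarrow> 0) at_top" unfolding \<rho>_def by (rule rho_lims)
    show "0 \<le> \<rho> \<theta>" for \<theta> using \<rho>0[of \<theta>] by simp
  qed (use A K qr m0p in auto)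
  show ?thesis using qr qd ql m0p unfolding F_def \<rho>_def by blast
qed

lemma existence:
  fixes a c D H tau :: real
  assumes a: "a > 0" and c: "c > 0" and D: "D > 0" and H: "H > 0" and tau: "tau \<ge> 0"
    and ct: "1 - c^3 * tau > 0"
  shows "\<exists>phi. heteroclinic c tau D H phi (p3 a (a / D)) (p2 a)"
proof -
  have Dnz: "D \<noteq> 0" using D by simp
  define \<kappa> where "\<kappa> = c^3 / (1 - c^3 * tau)"
  define K where "K = \<kappa> * tau"
  define h where "h = H / D"
  define A where "A = \<kappa> / (a * h)"
  have \<kappa>p: "\<kappa> > 0" unfolding \<kappa>_def using c ct by simp
  have Kp: "K \<ge> 0" unfolding K_def using \<kappa>p tau by simp
  have hp: "h > 0" unfolding h_def using H D by simp
  have Ap: "A > 0" unfolding A_def using \<kappa>p hp a by simp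
  have k1: "c^3 / (1 - c^3 * tau) = \<kappa>" unfolding \<kappa>_def ..
  have k2: "1 / (1 - c^3 * tau) = 1 + K" unfolding K_def \<kappa>_def using ct by (simp add: field_simps)
  have k3: "H = h * D" unfolding h_def using D by simp
  have k4: "\<kappa> = A * a * h" unfolding A_def using a hp by simp
  obtain q m0 where m0: "m0 > 0" and qr: "\<And>\<theta>. m0 \<le> q \<theta> \<and> q \<theta> \<le> 1"
    and qd: "\<And>\<theta>. (q has_real_derivative (A*(1/q \<theta> - 1) - 1/(1+exp \<theta>)*(q \<theta>+K))) (at \<theta>)"
    and ql: "(q \<longlongrightarrow> 1) at_top"
    using get_q[OF Ap Kp] by blast
  define \<rho> where "\<rho> = (\<lambda>\<theta>::real. 1/(1+exp \<theta>))"
  have \<rho>d: "(\<rho> has_real_derivative - (\<rho> \<theta> * (1 - \<rho> \<theta>))) (at \<theta>)" for \<theta>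
    unfolding \<rho>_def by (rule rho_facts(3))
  have \<rho>0: "0 < \<rho> \<theta>" and \<rho>1: "\<rho> \<theta> < 1" for \<theta> unfolding \<rho>_def using rho_facts by auto
  have qp: "q \<theta> > 0" for \<theta> using qr[of \<theta>] m0 by auto
  have qc: "continuous_on UNIV q"
    using qd by (meson DERIV_continuous continuous_at_imp_continuous_on)
  have "continuous_on UNIV (\<lambda>\<theta>. 1 / (a * h * q \<theta>))"
  proof -
    have qnz: "q \<theta> \<noteq> 0" for \<theta> using qp[of \<theta>] by simp
    show ?thesis using qc qnz a hp by (intro continuous_intros) auto
  qed
  then obtain Z where Z0: "Z 0 = 0" and Zd: "\<And>x. (Z has_real_derivative 1 / (a * h * q x)) (at x)"
    using antideriv by blast
  have dlo: "1 / (a * h * q x) \<ge> 1 / (a * h)" for x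
    using qr[of x] qp[of x] a hp by (simp add: field_simps)
  obtain \<Theta> where \<Theta>d0: "\<And>\<zeta>. (\<Theta> has_real_derivative inverse (1 / (a * h * q (\<Theta> \<zeta>)))) (at \<zeta>)"
      and \<Theta>t: "filterlim \<Theta> at_top at_top" and \<Theta>b: "filterlim \<Theta> at_bot at_bot"
    using inverse_param[of Z "\<lambda>x. 1 / (a * h * q x)" "1 / (a * h)", OF Zd dlo _ Z0] a hp by auto
  have \<Theta>d: "(\<Theta> has_real_derivative a * h * q (\<Theta> \<zeta>)) (at \<zeta>)" for \<zeta>
    using \<Theta>d0[of \<zeta>] by simp
  define Q where "Q = (\<lambda>\<zeta>. q (\<Theta> \<zeta>))"
  define R where "R = (\<lambda>\<zeta>. \<rho> (\<Theta> \<zeta>))"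
  have Qd: "(Q has_real_derivative (A*(1/Q \<zeta> - 1) - R \<zeta>*(Q \<zeta>+K)) * (a * h * Q \<zeta>)) (at \<zeta>)" for \<zeta>
    unfolding Q_def R_def \<rho>_def by (rule DERIV_chain2[OF qd \<Theta>d])
  have Rd: "(R has_real_derivative - (R \<zeta> * (1 - R \<zeta>)) * (a * h * Q \<zeta>)) (at \<zeta>)" for \<zeta>
    unfolding Q_def R_def by (rule DERIV_chain2[OF \<rho>d \<Theta>d])
  define V where "V = (\<lambda>\<zeta>. a * (1 - R \<zeta>) * Q \<zeta>)"
  define S where "S = (\<lambda>\<zeta>. a / D * R \<zeta>)"
  define J where "J = (\<lambda>\<zeta>. V \<zeta> + a * R \<zeta> - a)"
  define phi where "phi = (\<lambda>\<zeta>. (a, V \<zeta>, S \<zeta>, J \<zeta>))"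
  have deriv: "(phi has_vector_derivative layer_rhs c tau D H (phi \<zeta>)) (at \<zeta>)" for \<zeta>
  proof -
    define r where "r = R \<zeta>"
    define y where "y = Q \<zeta>"
    define r' where "r' = - (r * (1 - r)) * (a * h * y)"
    define y' where "y' = (A*(1/y - 1) - r*(y+K)) * (a * h * y)"
    have yp: "y > 0" unfolding y_def Q_def by (rule qp)
    have Vd: "(V has_real_derivative a * (- r') * y + a * (1 - r) * y') (at \<zeta>)"
      unfolding V_def r'_def y'_def r_def y_def
      by (rule derivative_eq_intros Rd Qd refl)+ (simp add: algebra_simps)
    have Sd: "(S has_real_derivative a / D * r') (at \<zeta>)"
      unfolding S_def r'_def r_def y_def by (rule DERIV_cmult[OF Rd])
    have Jd: "(J has_real_derivative (a * (- r') * y + a * (1 - r) * y') + a * r') (at \<zeta>)"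
      unfolding J_def
      by (rule derivative_eq_intros Vd Rd refl)+ (simp add: r'_def r_def y_def)
    have hv: "(phi has_vector_derivative (0, a * (- r') * y + a * (1 - r) * y', a / D * r',
          (a * (- r') * y + a * (1 - r) * y') + a * r')) (at \<zeta>)"
      unfolding phi_def
      using Vd Sd Jd
      by (intro has_vector_derivative_Pair has_vector_derivative_const)
         (simp_all add: has_real_derivative_iff_has_vector_derivative)
    have Vz: "V \<zeta> = a * (1 - r) * y" unfolding V_def r_def y_def ..
    have Sz: "S \<zeta> = a / D * r" unfolding S_def r_def ..
    have Jz: "J \<zeta> = a * (1 - r) * y + a * r - a" unfolding J_def Vz r_def ..
    have u0: "a + J \<zeta> - V \<zeta> - D * S \<zeta> = 0" unfolding Jz Vz Sz using D by simp
    have e2: "a * (- r') * y + a * (1 - r) * y' =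
        \<kappa> * (tau * (a + J \<zeta> - V \<zeta> - D * S \<zeta>) * (V \<zeta>)^2 - tau * H * S \<zeta> * V \<zeta> - J \<zeta>)"
      unfolding u0 unfolding Vz Sz Jz r'_def y'_def k3 K_def k4 using yp D
      by (simp add: field_simps)
    have e3: "a / D * r' = - (H / D) * S \<zeta> * V \<zeta>"
      unfolding Vz Sz r'_def k3 using D by (simp add: field_simps)
    have e4: "(a * (- r') * y + a * (1 - r) * y') + a * r' =
        (1 + K) * ((a + J \<zeta> - V \<zeta> - D * S \<zeta>) * (V \<zeta>)^2 - H * S \<zeta> * V \<zeta> - c^3 * J \<zeta>)"
    proof -
      have "a * r' = - H * S \<zeta> * V \<zeta>" using e3 D by (simp add: field_simps)
      moreover have "(1 + K) * c^3 = \<kappa>" using k1 k2 by (metis times_divide_eq_left mult.commute mult_1)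
      ultimately show ?thesis
      proof -
        assume X: "a * r' = - H * S \<zeta> * V \<zeta>" and Y: "(1 + K) * c^3 = \<kappa>"
        have "(1 + K) * (0 * (V \<zeta>)^2 - H * S \<zeta> * V \<zeta> - c^3 * J \<zeta>)
            = - (1 + K) * H * S \<zeta> * V \<zeta> - ((1 + K) * c^3) * J \<zeta>" by (simp add: algebra_simps)
        also have "\<dots> = - (1 + K) * H * S \<zeta> * V \<zeta> - \<kappa> * J \<zeta>" unfolding Y ..
        also have "\<dots> = \<kappa> * (tau * 0 * (V \<zeta>)^2 - tau * H * S \<zeta> * V \<zeta> - J \<zeta>) + (- H * S \<zeta> * V \<zeta>)"
          unfolding K_def by (simp add: algebra_simps)
        finally show ?thesis unfolding e2 u0 X by simp
      qed
    qed
    have "layer_rhs c tau D H (phi \<zeta>) = (0,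
        \<kappa> * (tau * (a + J \<zeta> - V \<zeta> - D * S \<zeta>) * (V \<zeta>)^2 - tau * H * S \<zeta> * V \<zeta> - J \<zeta>),
        - (H / D) * S \<zeta> * V \<zeta>,
        (1 + K) * ((a + J \<zeta> - V \<zeta> - D * S \<zeta>) * (V \<zeta>)^2 - H * S \<zeta> * V \<zeta> - c^3 * J \<zeta>))"
      unfolding phi_def layer_rhs_def k1 k2 by (simp only: prod.case)
    also have "\<dots> = (0, a * (- r') * y + a * (1 - r) * y', a / D * r',
          (a * (- r') * y + a * (1 - r) * y') + a * r')"
      by (simp only: e2[symmetric] e3[symmetric] e4[symmetric])
    finally have "layer_rhs c tau D H (phi \<zeta>) = (0, a * (- r') * y + a * (1 - r) * y', a / D * r',
          (a * (- r') * y + a * (1 - r) * y') + a * r')" .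
    then show ?thesis using hv by simp
  qed
  have Qt: "(Q \<longlongrightarrow> 1) at_top" unfolding Q_def by (rule filterlim_compose[OF ql \<Theta>t])
  have Rt: "(R \<longlongrightarrow> 0) at_top" unfolding R_def \<rho>_def by (rule filterlim_compose[OF rho_lims(1) \<Theta>t])
  have Rb: "(R \<longlongrightarrow> 1) at_bot" unfolding R_def \<rho>_def by (rule filterlim_compose[OF rho_lims(2) \<Theta>b])
  have lt: "(phi \<longlongrightarrow> p2 a) at_top"
  proof -
    have "(phi \<longlongrightarrow> (a, a * (1 - 0) * 1, a / D * 0, a * (1 - 0) * 1 + a * 0 - a)) at_top"
      unfolding phi_def V_def S_def J_def by (intro tendsto_intros Qt Rt) (use D in auto)
    then show ?thesis by (simp add: p2_def)
  qed
  have Vb: "(V \<longlongrightarrow> 0) at_bot"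
  proof (rule Lim_null_comparison)
    show "\<forall>\<^sub>F \<zeta> in at_bot. norm (V \<zeta>) \<le> a * (1 - R \<zeta>)"
    proof (intro always_eventually allI)
      fix \<zeta>
      have "0 < 1 - R \<zeta>" unfolding R_def using \<rho>1 by simp
      moreover have "Q \<zeta> > 0" "Q \<zeta> \<le> 1" unfolding Q_def using qp qr by auto
      ultimately show "norm (V \<zeta>) \<le> a * (1 - R \<zeta>)" unfolding V_def using a
        by (simp add: abs_mult mult_le_cancel_left1)
    qed
    have "((\<lambda>\<zeta>. a * (1 - R \<zeta>)) \<longlongrightarrow> a * (1 - 1)) at_bot" by (intro tendsto_intros Rb)
    then show "((\<lambda>\<zeta>. a * (1 - R \<zeta>)) \<longlongrightarrow> 0) at_bot" by simp
  qed
  have lb: "(phi \<longlongrightarrow> p3 a (a / D)) at_bot"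
  proof -
    have "(phi \<longlongrightarrow> (a, 0, a / D * 1, 0 + a * 1 - a)) at_bot"
      unfolding phi_def J_def S_def by (intro tendsto_intros Vb Rb) (use D in auto)
    then show ?thesis by (simp add: p3_def)
  qed
  have ne: "p3 a (a / D) \<noteq> p2 a" unfolding p3_def p2_def using a by simp
  show ?thesis unfolding heteroclinic_def using ne deriv lt lb by blast
qed


theorem lemma2:
  fixes a c D H tau :: real
  assumes "a > 0" "c > 0" "D > 0" "H > 0" "tau \<ge> 0" "1 - c^3 * tau > 0"
  shows "(\<forall>s. (\<exists>phi. heteroclinic c tau D H phi (p3 a s) (p2 a)) \<longleftrightarrow> s = a / D)
       \<and> (\<forall>phi. heteroclinic c tau D H phi (p3 a (a / D)) (p2 a) \<longrightarrow>
            (\<forall>\<zeta>. phi \<zeta> \<in> {(w, v, s, j). w = a \<and> a + j - v - D * s = 0}))"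
proof -
  have ex: "\<exists>phi. heteroclinic c tau D H phi (p3 a (a / D)) (p2 a)"
    by (rule existence[OF assms])
  have nec: "s = a / D \<and> (\<forall>\<zeta>. phi \<zeta> \<in> {(w, v, s, j). w = a \<and> a + j - v - D * s = 0})"
    if "heteroclinic c tau D H phi (p3 a s) (p2 a)" for s phi
    by (rule necessity[OF assms(6) assms(3) that])
  show ?thesis
  proof (intro conjI allI impI)
    fix s
    show "(\<exists>phi. heteroclinic c tau D H phi (p3 a s) (p2 a)) \<longleftrightarrow> s = a / D"
      using ex nec by blast
  next
    fix phi \<zeta>
    assume h: "heteroclinic c tau D H phi (p3 a (a / D)) (p2 a)"
    show "phi \<zeta> \<in> {(w, v, s, j). w = a \<and> a + j - v - D * s = 0}"
      using conjunct2[OF nec[OF h]] by (rule spec)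
  qed
qed

end
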